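(* Let $\mathbb V$ be a $k$-module over $\mathbb W$ admitting a multiplicative basis $\mathfrak B=\{v_i\}_{i\in I}$ with respect to the basis $\mathfrak B'=\{w_j\}_{j\in J}$ of $\mathbb W$. If $\mathbb V$ is simple, then any two elements of $I$ are connected (i.e. $I/\sim$ has exactly one class).
   Context: Fix integers $n\ge 2$ and $1\le k\le n$ and an arbitrary field $\mathbb F$; $S_n$ denotes the symmetric group on $n$ letters. A $k$-module over a linear space $\mathbb W$ is an $\mathbb F$-vector space $\mathbb V$ (the dimensions of $\mathbb V$ and $\mathbb W$ are arbitrary, possibly infinite) together with, for every $\sigma\in S_n$, an $n$-linear map $\mathbb V^k\times\mathbb W^{n-k}\to\mathbb V$, $(x_1,\dots,x_k,y_{k+1},\dots,y_n)\mapsto[x_1,\dots,x_k,y_{k+1},\dots,y_n]_\sigma$ (interpreted as an $n$-ary bracket in which the $l$-th argument is placed in position $\sigma(l)$). A $k$-submodule of $\mathbb V$ is a linear subspace $U$ such that $[u,x_2,\dots,x_k,y_{k+1},\dots,y_n]_\sigma\in U$ for all $\sigma\in S_n$, $u\in U$, $x_l\in\mathbb V$, $y_l\in\mathbb W$. $\mathbb V$ is simple if its only $k$-submodules are $\{0\}$ and $\mathbb V$. A basis $\mathfrak B=\{v_i\}_{i\in I}$ of $\mathbb V$ is multiplicative (with respect to a basis $\mathfrak B'=\{w_j\}_{j\in J}$ of $\mathbb W$) if for all $\sigma\in S_n$, $i_1,\dots,i_k\in I$, $j_{k+1},\dots,j_n\in J$, the element $[v_{i_1},\dots,v_{i_k},w_{j_{k+1}},\dots,w_{j_n}]_\sigma$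 lies in $\mathbb F v_r$ for some $r\in I$. Index machinery: let $\overline I=\{\overline i:i\in I\}$ and $\overline J=\{\overline j:j\in J\}$ be sets of new symbols disjoint from $I$ and $J$, with the convention $\overline{\overline x}=x$. For $\sigma\in S_n$, $i_1,\dots,i_k\in I$, $j_{k+1},\dots,j_n\in J$, let $a_\sigma(i_1,\dots,i_k,j_{k+1},\dots,j_n)=\emptyset$ if $[v_{i_1},\dots,v_{i_k},w_{j_{k+1}},\dots,w_{j_n}]_\sigma=0$ and $=\{r\}$ if this bracket is a nonzero element of $\mathbb F v_r$. For $i,i_2,\dots,i_k\in I$, $j_{k+1},\dots,j_n\in J$ let $b_\sigma(i,\overline i_2,\dots,\overline i_k,\overline j_{k+1},\dots,\overline j_n)=\{i'\in I: a_\sigma(i',i_2,\dots,i_k,j_{k+1},\dots,j_n)=\{i\}\}$. For $i\in I$, $X=(x_2,\dots,x_k)\in(I\,\dot\cup\,\overline I)^{k-1}$, $Y=(y_{k+1},\dots,y_n)\in(J\,\dot\cup\,\overline J)^{n-k}$ define $\mu(i,X,Y)\subseteq I$ by: $\mu(i,X,Y)=\bigcup_{\sigma\in S_n}a_\sigma(i,X,Y)$ if all $x_l\in I$ and all $y_l\in J$; $\mu(i,X,Y)=\bigcup_{\sigma\in S_n}b_\sigma(i,X,Y)$ if all $x_l\in\overline I$ and all $y_l\in\overline J$; and $\mu(i,X,Y)=\emptyset$ otherwise. For $\mathfrak A\subseteq I$ set $\phi(\mathfrak A,X,Y)=\bigcup_{i\in\mathfrak A}\mu(i,X,Y)$. Connections: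 for distinct $i,i'\in I$, a connection from $i$ to $i'$ is a finite sequence $(X_1,Y_1,\dots,X_t,Y_t)$, $t\ge1$, with $X_m\in(I\,\dot\cup\,\overline I)^{k-1}$ and $Y_m\in(J\,\dot\cup\,\overline J)^{n-k}$, such that, setting $\mathfrak A_0=\{i\}$ and $\mathfrak A_m=\phi(\mathfrak A_{m-1},X_m,Y_m)$, one has $\mathfrak A_m\neq\emptyset$ for $1\le m\le t-1$ and $i'\in\mathfrak A_t$. We say $i$ is connected to $i'$ if such a connection exists; by convention every $i\in I$ is connected to itself. This relation, written $i\sim i'$, is an equivalence relation on $I$. *)

theory Defs
  imports Complex_Main "HOL-Combinatorics.Permutations"
begin

definition Sym :: "nat \<Rightarrow> (nat \<Rightarrow> nat) set" where
  "Sym n = {\<sigma>. \<sigma> permutes {1..n}}"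

text \<open>A k-module V (the whole type 'v, a vector space over the field 'a with scalar
  multiplication sV) over the linear space W (type 'w, scalar multiplication sW).
  The bracket br sigma xs ys takes the list xs = [x_1,...,x_k] of V-arguments and
  the list ys = [y_(k+1),...,y_n] of W-arguments; it is required to be linear in
  each of its n arguments (for arguments of the right lengths).\<close>
definition is_kmodule ::
  "nat \<Rightarrow> nat \<Rightarrow> ('a::field \<Rightarrow> 'v::ab_group_add \<Rightarrow> 'v) \<Rightarrow> ('a \<Rightarrow> 'w::ab_group_add \<Rightarrow> 'w)
    \<Rightarrow> ((nat \<Rightarrow> nat) \<Rightarrow> 'v list \<Rightarrow> 'w list \<Rightarrow> 'v) \<Rightarrow> bool" where
  "is_kmodule n k sV sW br \<longleftrightarrow>
     vector_space sV \<and> vector_space sW \<and>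
     (\<forall>\<sigma>\<in>Sym n. \<forall>xs ys. length xs = k \<longrightarrow> length ys = n - k \<longrightarrow>
        (\<forall>l<k. Vector_Spaces.linear sV sV (\<lambda>u. br \<sigma> (xs[l := u]) ys)) \<and>
        (\<forall>l<n - k. Vector_Spaces.linear sW sV (\<lambda>u. br \<sigma> xs (ys[l := u]))))"

definition is_ksubmodule ::
  "nat \<Rightarrow> nat \<Rightarrow> ('a::field \<Rightarrow> 'v::ab_group_add \<Rightarrow> 'v)
    \<Rightarrow> ((nat \<Rightarrow> nat) \<Rightarrow> 'v list \<Rightarrow> 'w list \<Rightarrow> 'v) \<Rightarrow> 'v set \<Rightarrow> bool" where
  "is_ksubmodule n k sV br U \<longleftrightarrow>
     module.subspace sV U \<and>
     (\<forall>\<sigma>\<in>Sym n. \<forall>u\<in>U. \<forall>xs ys. length xs = k - 1 \<longrightarrow> length ys = n - k \<longrightarrow>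
        br \<sigma> (u # xs) ys \<in> U)"

definition is_simple_kmodule ::
  "nat \<Rightarrow> nat \<Rightarrow> ('a::field \<Rightarrow> 'v::ab_group_add \<Rightarrow> 'v)
    \<Rightarrow> ((nat \<Rightarrow> nat) \<Rightarrow> 'v list \<Rightarrow> 'w list \<Rightarrow> 'v) \<Rightarrow> bool" where
  "is_simple_kmodule n k sV br \<longleftrightarrow>
     (\<forall>U. is_ksubmodule n k sV br U \<longrightarrow> U = {0} \<or> U = UNIV)"

definition is_basis :: "('a::field \<Rightarrow> 'v::ab_group_add \<Rightarrow> 'v) \<Rightarrow> 'i set \<Rightarrow> ('i \<Rightarrow> 'v) \<Rightarrow> bool" where
  "is_basis sV I v \<longleftrightarrow>
     inj_on v I \<and> \<not> module.dependent sV (v ` I) \<and> module.span sV (v ` I) = UNIV"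

definition is_multiplicative_basis ::
  "nat \<Rightarrow> nat \<Rightarrow> ('a::field \<Rightarrow> 'v::ab_group_add \<Rightarrow> 'v)
    \<Rightarrow> ((nat \<Rightarrow> nat) \<Rightarrow> 'v list \<Rightarrow> 'w list \<Rightarrow> 'v)
    \<Rightarrow> 'i set \<Rightarrow> ('i \<Rightarrow> 'v) \<Rightarrow> 'j set \<Rightarrow> ('j \<Rightarrow> 'w) \<Rightarrow> bool" where
  "is_multiplicative_basis n k sV br I v J w \<longleftrightarrow>
     (\<forall>\<sigma>\<in>Sym n. \<forall>is js. set is \<subseteq> I \<longrightarrow> length is = k \<longrightarrow> set js \<subseteq> J \<longrightarrow> length js = n - k \<longrightarrow>
        (\<exists>r\<in>I. \<exists>c. br \<sigma> (map v is) (map w js) = sV c (v r)))"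

text \<open>a_sigma(i_1,...,i_k,j_(k+1),...,j_n): empty if the bracket is zero, and {r} if
  it is a nonzero element of F v_r.\<close>
definition a_idx ::
  "('a::field \<Rightarrow> 'v::ab_group_add \<Rightarrow> 'v) \<Rightarrow> ((nat \<Rightarrow> nat) \<Rightarrow> 'v list \<Rightarrow> 'w list \<Rightarrow> 'v)
    \<Rightarrow> 'i set \<Rightarrow> ('i \<Rightarrow> 'v) \<Rightarrow> ('j \<Rightarrow> 'w) \<Rightarrow> (nat \<Rightarrow> nat) \<Rightarrow> 'i list \<Rightarrow> 'j list \<Rightarrow> 'i set" where
  "a_idx sV br I v w \<sigma> is js =
     {r \<in> I. br \<sigma> (map v is) (map w js) \<noteq> 0 \<and> (\<exists>c. br \<sigma> (map v is) (map w js) = sV c (v r))}"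

definition b_idx ::
  "('a::field \<Rightarrow> 'v::ab_group_add \<Rightarrow> 'v) \<Rightarrow> ((nat \<Rightarrow> nat) \<Rightarrow> 'v list \<Rightarrow> 'w list \<Rightarrow> 'v)
    \<Rightarrow> 'i set \<Rightarrow> ('i \<Rightarrow> 'v) \<Rightarrow> ('j \<Rightarrow> 'w) \<Rightarrow> (nat \<Rightarrow> nat) \<Rightarrow> 'i \<Rightarrow> 'i list \<Rightarrow> 'j list \<Rightarrow> 'i set" where
  "b_idx sV br I v w \<sigma> i is js = {i' \<in> I. a_idx sV br I v w \<sigma> (i' # is) js = {i}}"

text \<open>Symbols of I (disjoint-union) bar I are encoded as 'i + 'i: Inl i is i, Inr i is bar i.
  Similarly for J.\<close>
definition mu ::
  "nat \<Rightarrow> ('a::field \<Rightarrow> 'v::ab_group_add \<Rightarrow> 'v) \<Rightarrow> ((nat \<Rightarrow> nat) \<Rightarrow> 'v list \<Rightarrow> 'w list \<Rightarrow> 'v)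
    \<Rightarrow> 'i set \<Rightarrow> ('i \<Rightarrow> 'v) \<Rightarrow> ('j \<Rightarrow> 'w) \<Rightarrow> 'i \<Rightarrow> ('i + 'i) list \<Rightarrow> ('j + 'j) list \<Rightarrow> 'i set" where
  "mu n sV br I v w i X Y =
     (if (\<forall>x\<in>set X. isl x) \<and> (\<forall>y\<in>set Y. isl y) then
        (\<Union>\<sigma>\<in>Sym n. a_idx sV br I v w \<sigma> (i # map projl X) (map projl Y))
      else if (\<forall>x\<in>set X. \<not> isl x) \<and> (\<forall>y\<in>set Y. \<not> isl y) then
        (\<Union>\<sigma>\<in>Sym n. b_idx sV br I v w \<sigma> i (map projr X) (map projr Y))
      else {})"

definition phi ::
  "nat \<Rightarrow> ('a::field \<Rightarrow> 'v::ab_group_add \<Rightarrow> 'v) \<Rightarrow> ((nat \<Rightarrow> nat) \<Rightarrow> 'v list \<Rightarrow> 'w list \<Rightarrow> 'v)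
    \<Rightarrow> 'i set \<Rightarrow> ('i \<Rightarrow> 'v) \<Rightarrow> ('j \<Rightarrow> 'w) \<Rightarrow> 'i set \<Rightarrow> ('i + 'i) list \<Rightarrow> ('j + 'j) list \<Rightarrow> 'i set" where
  "phi n sV br I v w A X Y = (\<Union>i\<in>A. mu n sV br I v w i X Y)"

fun phi_iter ::
  "nat \<Rightarrow> ('a::field \<Rightarrow> 'v::ab_group_add \<Rightarrow> 'v) \<Rightarrow> ((nat \<Rightarrow> nat) \<Rightarrow> 'v list \<Rightarrow> 'w list \<Rightarrow> 'v)
    \<Rightarrow> 'i set \<Rightarrow> ('i \<Rightarrow> 'v) \<Rightarrow> ('j \<Rightarrow> 'w) \<Rightarrow> 'i set \<Rightarrow> (('i + 'i) list \<times> ('j + 'j) list) list \<Rightarrow> 'i set" where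
  "phi_iter n sV br I v w A [] = A"
| "phi_iter n sV br I v w A ((X, Y) # ps) = phi_iter n sV br I v w (phi n sV br I v w A X Y) ps"

definition valid_step ::
  "nat \<Rightarrow> nat \<Rightarrow> 'i set \<Rightarrow> 'j set \<Rightarrow> ('i + 'i) list \<times> ('j + 'j) list \<Rightarrow> bool" where
  "valid_step n k I J p \<longleftrightarrow>
     length (fst p) = k - 1 \<and> length (snd p) = n - k \<and>
     (\<forall>x\<in>set (fst p). case_sum (\<lambda>i. i \<in> I) (\<lambda>i. i \<in> I) x) \<and>
     (\<forall>y\<in>set (snd p). case_sum (\<lambda>j. j \<in> J) (\<lambda>j. j \<in> J) y)"

definition is_connection ::
  "nat \<Rightarrow> nat \<Rightarrow> ('a::field \<Rightarrow> 'v::ab_group_add \<Rightarrow> 'v) \<Rightarrow> ((nat \<Rightarrow> nat) \<Rightarrow> 'v list \<Rightarrow> 'w list \<Rightarrow> 'v)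
    \<Rightarrow> 'i set \<Rightarrow> ('i \<Rightarrow> 'v) \<Rightarrow> 'j set \<Rightarrow> ('j \<Rightarrow> 'w) \<Rightarrow> 'i \<Rightarrow> 'i
    \<Rightarrow> (('i + 'i) list \<times> ('j + 'j) list) list \<Rightarrow> bool" where
  "is_connection n k sV br I v J w i i' ps \<longleftrightarrow>
     ps \<noteq> [] \<and> (\<forall>p\<in>set ps. valid_step n k I J p) \<and>
     (\<forall>m. 1 \<le> m \<and> m < length ps \<longrightarrow> phi_iter n sV br I v w {i} (take m ps) \<noteq> {}) \<and>
     i' \<in> phi_iter n sV br I v w {i} ps"

definition idx_connected ::
  "nat \<Rightarrow> nat \<Rightarrow> ('a::field \<Rightarrow> 'v::ab_group_add \<Rightarrow> 'v) \<Rightarrow> ((nat \<Rightarrow> nat) \<Rightarrow> 'v list \<Rightarrow> 'w list \<Rightarrow> 'v)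
    \<Rightarrow> 'i set \<Rightarrow> ('i \<Rightarrow> 'v) \<Rightarrow> 'j set \<Rightarrow> ('j \<Rightarrow> 'w) \<Rightarrow> 'i \<Rightarrow> 'i \<Rightarrow> bool" where
  "idx_connected n k sV br I v J w i i' \<longleftrightarrow>
     i = i' \<or> (i \<noteq> i' \<and> (\<exists>ps. is_connection n k sV br I v J w i i' ps))"

end

theory Submission
  imports Defs
begin

lemma gen_lemma:
  fixes s :: "'a::field \<Rightarrow> 'b::ab_group_add \<Rightarrow> 'b" and sV :: "'a \<Rightarrow> 'v::ab_group_add \<Rightarrow> 'v"
  assumes span: "module.span s B = UNIV"
    and lin: "\<And>xs l. length xs = N \<Longrightarrow> l < N \<Longrightarrow> Vector_Spaces.linear s sV (\<lambda>z. F (xs[l := z]))"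
    and sub: "module.subspace sV U"
    and base: "\<And>xs. length xs = N \<Longrightarrow> set xs \<subseteq> B \<Longrightarrow> F xs \<in> U"
  shows "length xs = N \<Longrightarrow> F xs \<in> U"
proof -
  have "\<forall>xs. length xs = N \<longrightarrow> (\<forall>l<N. l \<ge> m \<longrightarrow> xs ! l \<in> B) \<longrightarrow> F xs \<in> U" for m
  proof (induction m)
    case 0
    show ?case
    proof (intro allI impI)
      fix xs :: "'b list" assume l: "length xs = N" and h: "\<forall>l<N. 0 \<le> l \<longrightarrow> xs ! l \<in> B"
      have "set xs \<subseteq> B"
      proof
        fix x assume "x \<in> set xs"
        then obtain i where "i < length xs" "x = xs ! i" by (auto simp: in_set_conv_nth)
        then show "x \<in> B" using h l by auto
      qed
      then show "F xs \<in> U" using base l by blast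
    qed
  next
    case (Suc m)
    show ?case
    proof (intro allI impI)
      fix xs :: "'b list" assume len: "length xs = N" and hb: "\<forall>l<N. Suc m \<le> l \<longrightarrow> xs ! l \<in> B"
      show "F xs \<in> U"
      proof (cases "m < N")
        case False
        then show ?thesis using Suc.IH len hb by auto
      next
        case True
        have mh: "module_hom s sV (\<lambda>z. F (xs[m := z]))"
          using lin[OF len True] by (simp add: module_hom_iff_linear)
        have ms: "module s" using mh module_hom_def by blast
        have S: "module.subspace s ((\<lambda>z. F (xs[m := z])) -` U)"
          using module_hom.subspace_vimage[OF mh sub] .
        have "B \<subseteq> (\<lambda>z. F (xs[m := z])) -` U"
        proof
          fix b assume "b \<in> B"
          have "\<forall>l<N. m \<le> l \<longrightarrow> xs[m := b] ! l \<in> B"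
          proof (intro allI impI)
            fix l assume "l < N" "m \<le> l"
            show "xs[m := b] ! l \<in> B"
            proof (cases "l = m")
              case True then show ?thesis using \<open>b \<in> B\<close> len \<open>l < N\<close> by simp
            next
              case False then have "Suc m \<le> l" using \<open>m \<le> l\<close> by simp
              then show ?thesis using hb False \<open>l < N\<close> by simp
            qed
          qed
          then show "b \<in> (\<lambda>z. F (xs[m := z])) -` U" using Suc.IH len by auto
        qed
        have "module.span s B \<subseteq> (\<lambda>z. F (xs[m := z])) -` U"
          using module.span_minimal[OF ms \<open>B \<subseteq> _\<close> S] .
        then have "xs ! m \<in> (\<lambda>z. F (xs[m := z])) -` U" unfolding span by blast
        then show ?thesis by simp
      qed
    qed
  qed
  from this[of N] show "length xs = N \<Longrightarrow> F xs \<in> U" by auto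
qed

lemma phi_iter_append:
  "phi_iter n sV br I v w A (ps @ [(X, Y)]) = phi n sV br I v w (phi_iter n sV br I v w A ps) X Y"
  by (induction ps arbitrary: A) auto

lemma list_in_image:
  "set ys \<subseteq> f ` A \<Longrightarrow> \<exists>xs. ys = map f xs \<and> set xs \<subseteq> A"
proof (induction ys)
  case Nil then show ?case by simp
next
  case (Cons y ys)
  then obtain xs where "ys = map f xs" "set xs \<subseteq> A" by auto
  moreover obtain x where "x \<in> A" "y = f x" using Cons.prems by auto
  ultimately show ?case by (intro exI[of _ "x # xs"]) auto
qed

theorem mainTheorem8:
  fixes n k :: nat
    and sV :: "'a::field \<Rightarrow> 'v::ab_group_add \<Rightarrow> 'v"
    and sW :: "'a \<Rightarrow> 'w::ab_group_add \<Rightarrow> 'w"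
    and br :: "(nat \<Rightarrow> nat) \<Rightarrow> 'v list \<Rightarrow> 'w list \<Rightarrow> 'v"
    and I :: "'i set" and v :: "'i \<Rightarrow> 'v"
    and J :: "'j set" and w :: "'j \<Rightarrow> 'w"
  assumes "2 \<le> n" and "1 \<le> k" and "k \<le> n"
    and "is_kmodule n k sV sW br"
    and "is_basis sV I v" and "is_basis sW J w"
    and "is_multiplicative_basis n k sV br I v J w"
    and "is_simple_kmodule n k sV br"
  shows "\<forall>i\<in>I. \<forall>i'\<in>I. idx_connected n k sV br I v J w i i'"
proof (intro ballI)
  fix i0 i' assume i0: "i0 \<in> I" and i': "i' \<in> I"
  note km = assms(4)[unfolded is_kmodule_def]
  have vsV: "vector_space sV" using km by blast
  have msV: "module sV" using vsV module_iff_vector_space by blast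
  have bV: "inj_on v I" "\<not> module.dependent sV (v ` I)" "module.span sV (v ` I) = UNIV"
    using assms(5) unfolding is_basis_def by auto
  have bW: "module.span sW (w ` J) = UNIV"
    using assms(6) unfolding is_basis_def by auto
  define C where "C = {j\<in>I. idx_connected n k sV br I v J w i0 j}"
  define U where "U = module.span sV (v ` C)"
  have subU: "module.subspace sV U" unfolding U_def using module.subspace_span[OF msV] .
  have i0C: "i0 \<in> C" using i0 unfolding C_def idx_connected_def by simp
  have key: "r \<in> C" if hyp: "j \<in> C" "set is \<subseteq> I" "length is = k - 1" "set js \<subseteq> J"
      "length js = n - k" "\<sigma> \<in> Sym n" and r: "r \<in> a_idx sV br I v w \<sigma> (j # is) js"
    for j r "is" js \<sigma>
  proof -
    have rI: "r \<in> I" using r unfolding a_idx_def by auto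
    show ?thesis
    proof (cases "r = i0")
      case True then show ?thesis using i0C by simp
    next
      case rne: False
      define X where "X = (map Inl is :: ('i + 'i) list)"
      define Y where "Y = (map Inl js :: ('j + 'j) list)"
      have mapX: "map projl X = is" unfolding X_def by (induction "is") auto
      have mapY: "map projl Y = js" unfolding Y_def by (induction js) auto
      have rmu: "r \<in> mu n sV br I v w j X Y"
        unfolding mu_def mapX mapY using r hyp(6) by (auto simp: X_def Y_def)
      have vs: "valid_step n k I J (X, Y)"
        unfolding valid_step_def X_def Y_def using hyp by auto
      have "idx_connected n k sV br I v J w i0 r"
      proof (cases "j = i0")
        case True
        have "is_connection n k sV br I v J w i0 r [(X, Y)]"
          unfolding is_connection_def using vs rmu True by (auto simp: phi_def)
        then show ?thesis unfolding idx_connected_def using rne by metis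
      next
        case False
        then obtain ps where ps: "is_connection n k sV br I v J w i0 j ps"
          using hyp(1) unfolding C_def idx_connected_def by auto
        have jin: "j \<in> phi_iter n sV br I v w {i0} ps" using ps unfolding is_connection_def by auto
        have "is_connection n k sV br I v J w i0 r (ps @ [(X, Y)])"
          unfolding is_connection_def
        proof (intro conjI allI impI)
          show "ps @ [(X, Y)] \<noteq> []" by simp
          show "\<forall>p\<in>set (ps @ [(X, Y)]). valid_step n k I J p"
            using ps vs unfolding is_connection_def by auto
          show "r \<in> phi_iter n sV br I v w {i0} (ps @ [(X, Y)])"
            unfolding phi_iter_append phi_def using jin rmu by blast
        next
          fix m assume m: "1 \<le> m \<and> m < length (ps @ [(X, Y)])"
          show "phi_iter n sV br I v w {i0} (take m (ps @ [(X, Y)])) \<noteq> {}"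
          proof (cases "m < length ps")
            case True then show ?thesis using ps m unfolding is_connection_def by auto
          next
            case False
            then have "m = length ps" using m by simp
            then show ?thesis using jin by auto
          qed
        qed
        then show ?thesis unfolding idx_connected_def using rne by metis
      qed
      then show ?thesis using rI unfolding C_def by simp
    qed
  qed
  have base: "br \<sigma> (v j # map v is) (map w js) \<in> U" if hyp: "j \<in> C" "set is \<subseteq> I" "length is = k - 1"
      "set js \<subseteq> J" "length js = n - k" "\<sigma> \<in> Sym n" for j "is" js \<sigma>
  proof -
    have jI: "j \<in> I" using hyp(1) unfolding C_def by simp
    have "length (j # is) = k" using hyp assms(2) by simp
    moreover have "set (j # is) \<subseteq> I" using hyp jI by simp
    ultimately have "\<exists>r\<in>I. \<exists>c. br \<sigma> (map v (j # is)) (map w js) = sV c (v r)"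
      using assms(7) hyp(4,5,6) unfolding is_multiplicative_basis_def by blast
    then obtain r c where r: "r \<in> I" and e: "br \<sigma> (map v (j # is)) (map w js) = sV c (v r)"
      by blast
    show ?thesis
    proof (cases "br \<sigma> (v j # map v is) (map w js) = 0")
      case True then show ?thesis using module.subspace_0[OF msV subU] by simp
    next
      case False
      then have "r \<in> a_idx sV br I v w \<sigma> (j # is) js" using r e unfolding a_idx_def by auto
      then have "r \<in> C" using key hyp by blast
      then have "v r \<in> U" unfolding U_def using module.span_base[OF msV] by blast
      then have "sV c (v r) \<in> U" unfolding U_def using module.span_scale[OF msV] by blast
      then show ?thesis using e by simp
    qed
  qed
  have stepA: "br \<sigma> (v j # xs) ys \<in> U" if hyp: "j \<in> C" "set xs \<subseteq> v ` I" "length xs = k - 1"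
      "length ys = n - k" "\<sigma> \<in> Sym n" for j xs ys \<sigma>
  proof -
    obtain "is" where xs: "xs = map v is" "set is \<subseteq> I" using list_in_image[OF hyp(2)] by blast
    show ?thesis
    proof (rule gen_lemma[where s = sW and B = "w ` J" and N = "n - k" and F = "br \<sigma> (v j # xs)"])
      show "module.span sW (w ` J) = UNIV" by (rule bW)
      show "module.subspace sV U" by (rule subU)
      show "length ys = n - k" by (rule hyp(4))
    next
      fix zs :: "'w list" and l assume "length zs = n - k" "l < n - k"
      then show "Vector_Spaces.linear sW sV (\<lambda>z. br \<sigma> (v j # xs) (zs[l := z]))"
        using km hyp assms(2) by auto
    next
      fix zs :: "'w list" assume "length zs = n - k" "set zs \<subseteq> w ` J"
      then obtain js where "zs = map w js" "set js \<subseteq> J" using list_in_image by blast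
      then show "br \<sigma> (v j # xs) zs \<in> U" using base[of j "is" js \<sigma>] hyp xs \<open>length zs = n - k\<close> by auto
    qed
  qed
  have stepB: "br \<sigma> (v j # xs) ys \<in> U" if hyp: "j \<in> C" "length xs = k - 1"
      "length ys = n - k" "\<sigma> \<in> Sym n" for j xs ys \<sigma>
  proof (rule gen_lemma[where s = sV and B = "v ` I" and N = "k - 1" and F = "\<lambda>xs. br \<sigma> (v j # xs) ys"])
    show "module.span sV (v ` I) = UNIV" by (rule bV(3))
    show "module.subspace sV U" by (rule subU)
    show "length xs = k - 1" by (rule hyp(2))
  next
    fix zs :: "'v list" and l assume "length zs = k - 1" "l < k - 1"
    then have "length (v j # zs) = k" "Suc l < k" using assms(2) by auto
    then have "Vector_Spaces.linear sV sV (\<lambda>u. br \<sigma> ((v j # zs)[Suc l := u]) ys)"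
      using km hyp by blast
    then show "Vector_Spaces.linear sV sV (\<lambda>z. br \<sigma> (v j # zs[l := z]) ys)" by simp
  next
    fix zs :: "'v list" assume "length zs = k - 1" "set zs \<subseteq> v ` I"
    then show "br \<sigma> (v j # zs) ys \<in> U" using stepA hyp by blast
  qed
  have stepC: "br \<sigma> (u # xs) ys \<in> U" if hyp: "u \<in> U" "length xs = k - 1"
      "length ys = n - k" "\<sigma> \<in> Sym n" for u xs ys \<sigma>
  proof -
    have "length (v i0 # xs) = k" "(0::nat) < k" using hyp assms(2) by auto
    then have "Vector_Spaces.linear sV sV (\<lambda>u. br \<sigma> ((v i0 # xs)[0 := u]) ys)"
      using km hyp by blast
    then have mh: "module_hom sV sV (\<lambda>u. br \<sigma> (u # xs) ys)" by (simp add: module_hom_iff_linear)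
    have S: "module.subspace sV ((\<lambda>u. br \<sigma> (u # xs) ys) -` U)"
      using module_hom.subspace_vimage[OF mh subU] .
    have sb: "v ` C \<subseteq> (\<lambda>u. br \<sigma> (u # xs) ys) -` U"
    proof
      fix x assume "x \<in> v ` C"
      then obtain c where "c \<in> C" "x = v c" by blast
      then show "x \<in> (\<lambda>u. br \<sigma> (u # xs) ys) -` U" using stepB[of c xs ys \<sigma>] hyp(2,3,4) by simp
    qed
    have "U \<subseteq> (\<lambda>u. br \<sigma> (u # xs) ys) -` U"
      using module.span_minimal[OF msV sb S] unfolding U_def[symmetric] .
    then show ?thesis using hyp(1) by blast
  qed
  have "is_ksubmodule n k sV br U"
    unfolding is_ksubmodule_def using subU stepC by blast
  then have "U = {0} \<or> U = UNIV" using assms(8) unfolding is_simple_kmodule_def by blast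
  moreover have "v i0 \<in> U" unfolding U_def using i0C module.span_base[OF msV] by blast
  moreover have "v i0 \<noteq> 0" using bV(2) i0 module.dependent_zero[OF msV, of "v ` I"] by force
  ultimately have UU: "U = UNIV" by blast
  have "i' \<in> C"
  proof (rule ccontr)
    assume nC: "i' \<notin> C"
    have "v ` C \<subseteq> v ` I - {v i'}"
    proof
      fix x assume "x \<in> v ` C"
      then obtain c where c: "c \<in> C" "x = v c" by auto
      then have "c \<in> I" "c \<noteq> i'" using nC unfolding C_def by auto
      then show "x \<in> v ` I - {v i'}" using c bV(1) i' by (auto dest: inj_onD)
    qed
    then have "U \<subseteq> module.span sV (v ` I - {v i'})"
      unfolding U_def using module.span_mono[OF msV] by blast
    then have "v i' \<in> module.span sV (v ` I - {v i'})" using UU by blast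
    then have "module.dependent sV (v ` I)"
      using vector_space.dependent_def[OF vsV] i' by blast
    then show False using bV(2) by simp
  qed
  then show "idx_connected n k sV br I v J w i0 i'" unfolding C_def by simp
qed

end
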